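(* Let $V$ be a real vector space of dimension $n$ and $1\le k\le n-1$. Every lagrangian subspace $L\subseteq V\oplus\wedge^kV^*$ satisfies condition (C2w) ($L\subseteq L^\perp$ and $L\cap V=\mathrm{pr}_2(L)^\circ$) and condition (C3s) ($L\subseteq L^\perp$ and $\mathrm{Ann}(\mathrm{pr}_1(L))=L\cap\wedge^kV^*$).
   Context: On $V\oplus\wedge^kV^*$ the pairing is $\langle X+\alpha,Y+\beta\rangle=i_X\beta+i_Y\alpha\in\wedge^{k-1}V^*$; $L^\perp$ is the orthogonal, and $L$ is lagrangian if $L=L^\perp$. $\mathrm{pr}_1,\mathrm{pr}_2$ are the projections onto $V$ and $\wedge^kV^*$. For $S\subseteq\wedge^kV^*$, $S^\circ=\{X\in V\mid i_X\eta=0\ \forall\eta\in S\}$; for $E\subseteq V$, $\mathrm{Ann}(E)=\{\alpha\in\wedge^kV^*\mid i_Y\alpha=0\ \forall Y\in E\}$. *)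

theory Defs
  imports "HOL-Analysis.Analysis"
begin

text \<open>An element of \<wedge>^k V^* is modelled
  as a real-valued alternating k-multilinear map on V; its arguments are given as a
  sequence vs :: nat \<Rightarrow> 'a, of which only the entries vs 0, ..., vs (k-1) matter.\<close>

type_synonym 'a form = "(nat \<Rightarrow> 'a) \<Rightarrow> real"

definition kform :: "nat \<Rightarrow> ('a::real_vector) form \<Rightarrow> bool" where
  "kform k f \<longleftrightarrow>
     (\<forall>vs ws. (\<forall>i<k. vs i = ws i) \<longrightarrow> f vs = f ws) \<and>
     (\<forall>i<k. \<forall>vs. linear (\<lambda>x. f (vs(i := x)))) \<and>
     (\<forall>vs i j. i < k \<longrightarrow> j < k \<longrightarrow> i \<noteq> j \<longrightarrow> vs i = vs j \<longrightarrow> f vs = 0)"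

definition interior :: "'a \<Rightarrow> 'a form \<Rightarrow> 'a form" where
  "interior X f = (\<lambda>vs. f (\<lambda>i. if i = 0 then X else vs (i - 1)))"

definition zero_form :: "'a form" where
  "zero_form = (\<lambda>_. 0)"

definition pairing :: "'a \<times> 'a form \<Rightarrow> 'a \<times> 'a form \<Rightarrow> 'a form" where
  "pairing p q = (\<lambda>vs. interior (fst p) (snd q) vs + interior (fst q) (snd p) vs)"

definition gsubspace :: "nat \<Rightarrow> ('a::real_vector \<times> 'a form) set \<Rightarrow> bool" where
  "gsubspace k L \<longleftrightarrow>
     (\<forall>p\<in>L. kform k (snd p)) \<and>
     (0, zero_form) \<in> L \<and>
     (\<forall>p\<in>L. \<forall>q\<in>L. (fst p + fst q, \<lambda>vs. snd p vs + snd q vs) \<in> L) \<and>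
     (\<forall>c. \<forall>p\<in>L. (c *\<^sub>R fst p, \<lambda>vs. c * snd p vs) \<in> L)"

definition orth :: "nat \<Rightarrow> ('a::real_vector \<times> 'a form) set \<Rightarrow> ('a \<times> 'a form) set" where
  "orth k L = {q. kform k (snd q) \<and> (\<forall>p\<in>L. pairing p q = zero_form)}"

definition lagrangian :: "nat \<Rightarrow> ('a::real_vector \<times> 'a form) set \<Rightarrow> bool" where
  "lagrangian k L \<longleftrightarrow> gsubspace k L \<and> L = orth k L"

definition annV :: "'a form set \<Rightarrow> 'a set" where
  "annV S = {X. \<forall>\<eta>\<in>S. interior X \<eta> = zero_form}"

definition Ann :: "nat \<Rightarrow> ('a::real_vector) set \<Rightarrow> 'a form set" where
  "Ann k E = {\<alpha>. kform k \<alpha> \<and> (\<forall>Y\<in>E. interior Y \<alpha> = zero_form)}"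

definition capV :: "('a::zero \<times> 'a form) set \<Rightarrow> 'a set" where
  "capV L = {X. (X, zero_form) \<in> L}"

definition capF :: "('a::zero \<times> 'a form) set \<Rightarrow> 'a form set" where
  "capF L = {\<alpha>. (0, \<alpha>) \<in> L}"

definition C2w :: "nat \<Rightarrow> ('a::real_vector \<times> 'a form) set \<Rightarrow> bool" where
  "C2w k L \<longleftrightarrow> L \<subseteq> orth k L \<and> capV L = annV (snd ` L)"

definition C3s :: "nat \<Rightarrow> ('a::real_vector \<times> 'a form) set \<Rightarrow> bool" where
  "C3s k L \<longleftrightarrow> L \<subseteq> orth k L \<and> Ann k (fst ` L) = capF L"

end

theory Submission
  imports Defs
begin

lemma interior_zero_vec:
  assumes "kform k f" "1 \<le> k"
  shows "interior 0 f = zero_form"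
proof
  fix vs :: "nat \<Rightarrow> 'a"
  define ws where "ws = (\<lambda>i. if i = 0 then (0::'a) else vs (i - 1))"
  have "linear (\<lambda>x. f (ws(0 := x)))" using assms unfolding kform_def by auto
  hence "f (ws(0 := 0)) = 0" using linear_0 by fastforce
  moreover have "ws(0 := 0) = ws" unfolding ws_def by auto
  ultimately show "interior 0 f vs = zero_form vs"
    unfolding interior_def zero_form_def ws_def by simp
qed

lemma interior_zero_form: "interior X zero_form = zero_form"
  unfolding interior_def zero_form_def by simp

lemma kform_zero: "kform k (zero_form :: 'a::real_vector form)"
  unfolding kform_def zero_form_def by (auto intro: linearI)

theorem lemmaA1:
  fixes L :: "('a::euclidean_space \<times> 'a form) set" and k n :: nat
  assumes "DIM('a) = n" and "1 \<le> k" and "k \<le> n - 1"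
    and "lagrangian k L"
  shows "C2w k L \<and> C3s k L"
proof -
  have G: "gsubspace k L" and E: "L = orth k L" using assms(4) unfolding lagrangian_def by auto
  have KF: "\<And>p. p \<in> L \<Longrightarrow> kform k (snd p)" using G unfolding gsubspace_def by auto
  have c1: "capV L = annV (snd ` L)"
  proof -
    have "X \<in> capV L \<longleftrightarrow> X \<in> annV (snd ` L)" for X
    proof -
      have "X \<in> capV L \<longleftrightarrow> (X, zero_form) \<in> orth k L" unfolding capV_def using E by auto
      also have "\<dots> \<longleftrightarrow> (\<forall>p\<in>L. interior X (snd p) = zero_form)"
        unfolding orth_def pairing_def using kform_zero[of k]
        by (simp add: interior_zero_form) (simp add: zero_form_def, blast)
      also have "\<dots> \<longleftrightarrow> X \<in> annV (snd ` L)" unfolding annV_def by auto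
      finally show ?thesis .
    qed
    thus ?thesis by auto
  qed
  have c2: "Ann k (fst ` L) = capF L"
  proof -
    have "a \<in> capF L \<longleftrightarrow> a \<in> Ann k (fst ` L)" for a
    proof -
      have "a \<in> capF L \<longleftrightarrow> (0, a) \<in> orth k L" unfolding capF_def using E by auto
      also have "\<dots> \<longleftrightarrow> kform k a \<and> (\<forall>p\<in>L. interior (fst p) a = zero_form)"
      proof -
        have "\<And>p. p \<in> L \<Longrightarrow> pairing p (0, a) = interior (fst p) a"
          using interior_zero_vec[OF KF assms(2)]
          by (auto simp: pairing_def zero_form_def fun_eq_iff)
        thus ?thesis unfolding orth_def by auto
      qed
      also have "\<dots> \<longleftrightarrow> a \<in> Ann k (fst ` L)" unfolding Ann_def by auto
      finally show ?thesis .
    qed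
    thus ?thesis by auto
  qed
  show ?thesis unfolding C2w_def C3s_def using c1 c2 E by auto
qed

end
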